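(* In the setting described in the context, let $\varepsilon=\epsilon e$ with $e=(1,\dots,1)\in\mathbb{R}^p$, suppose Algorithm Solve(QVP) with tolerance $\epsilon$ terminates at iteration $K$, and let $\mathcal{L}=\mathcal{N}(\mathcal{Y}_{WN})$ and $\mathcal{U}=\mathcal{N}(V_\varepsilon)=\mathcal{P}^K$. Then (i) $\mathcal{L}\subseteq\mathcal{Y}^{\diamond}\subseteq\mathcal{U}$; (ii) ${\rm WMin}\,\mathcal{Y}^{\diamond}\subseteq\mathcal{U}_\varepsilon\cap\mathcal{Y}^{\diamond}\subseteq\mathcal{Y}^{\diamond}_\varepsilon$; (iii) ${\rm WMin}\,\mathcal{L}\subseteq\mathcal{Y}^{\diamond}_\varepsilon$.
   Context: Setting: $\mathcal{S}\subset\mathbb{R}^n$ nonempty convex compact; $f=(f_1,\dots,f_p):\mathbb{R}^n\to\mathbb{R}^p$ ($p\ge2$), each $f_i$ strictly quasiconvex on $\mathcal{S}$ (continuous and $h(x^1)<h(x^2)\Rightarrow h(\lambda x^1+(1-\lambda)x^2)<h(x^2)$ for $0<\lambda<1$). Vector inequalities are componentwise, $[a,b]=\{z:a\le z\le b\}$, $e^i$ the $i$-th unit vector. $\mathcal{Y}=f(\mathcal{S})$, $\mathcal{Y}^+=\mathcal{Y}+\mathbb{R}^p_+$. $m_i=\min_{x\in\mathcal{S}}f_i(x)$ (assume $m\notin\mathcal{Y}$); $M\in\mathbb{R}^p$ with $M_i\ge\max_{x\in\mathcal{S}}f_i(x)$ (constructed as the max of $f_i$ over the vertices of a simplex containing $\mathcal{S}$).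 $\mathcal{Y}^{\diamond}=\mathcal{Y}^+\cap(M-\mathbb{R}^p_+)$. For $Q\subset\mathbb{R}^p$: ${\rm WMin}\,Q=\{q\in Q:(q-\operatorname{int}\mathbb{R}^p_+)\cap Q=\emptyset\}$ and $Q_\varepsilon=\{q\in Q:(q-\varepsilon-\operatorname{int}\mathbb{R}^p_+)\cap Q=\emptyset\}$. For $Q\subset[m,M]$, the conormal hull is $\mathcal{N}(Q)=(Q+\mathbb{R}^p_+)\cap(M-\mathbb{R}^p_+)$ (the smallest set containing $Q$ such that $[y,M]$ lies in it for each of its points $y$). Fix $\hat d>0$; $(P^2(v))$ is $\min_{x\in\mathcal{S}}\max_j (f_j(x)-v_j)/\hat d_j$. A vertex $v$ of a finite set $V$ is proper if no other $v'\in V$, $v'\ne v$, satisfies $v'\le v$. Algorithm Solve(QVP) with tolerance $\epsilon\ge0$: $V^0=\{m\}$, $V_\varepsilon=\emptyset$, $\mathcal{Y}_{WN}=\emptyset$, $k=0$. While $V^k\setminus V_\varepsilon\ne\emptyset$: choose $v^k\in V^k\setminus V_\varepsilon$, solve $(P^2(v^k))$ with optimal $(x^k,t_k)$, set $w^k=v^k+t_k\hat d$, add $f(x^k)$ to $\mathcal{Y}_{WN}$; if $\|w^k-v^k\|\le\epsilon$, add $v^k$ to $V_\varepsilon$ and repeat the loop (without changing $k$); otherwise set $V^{k+1}=(V^k\setminus\{v^k\})\cup\{v^k+(w^k_i-v^k_i)e^i:i=1,\dots,p\}$, remove improper elements, and increase $k$ by one. $\mathcal{P}^k=\bigcup_{v\in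 V^k}[v,M]$. *)

theory Defs
  imports "HOL-Analysis.Analysis"
begin

text \<open>Vectors in R^p are represented as real^'p; the order on real^'p is the
componentwise order of the library (less_eq_vec_def).\<close>

definition nonneg_orthant :: "(real^'p) set" where
  "nonneg_orthant = {z. \<forall>i. 0 \<le> z $ i}"

definition int_orthant :: "(real^'p) set" where
  "int_orthant = {z. \<forall>i. 0 < z $ i}"

definition strictly_quasiconvex_on :: "(real^'n) set \<Rightarrow> (real^'n \<Rightarrow> real) \<Rightarrow> bool" where
  "strictly_quasiconvex_on S h \<longleftrightarrow> continuous_on S h \<and>
     (\<forall>x1\<in>S. \<forall>x2\<in>S. \<forall>l::real. 0 < l \<and> l < 1 \<and> h x1 < h x2
        \<longrightarrow> h (l *\<^sub>R x1 + (1 - l) *\<^sub>R x2) < h x2)"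

definition WMin :: "(real^'p) set \<Rightarrow> (real^'p) set" where
  "WMin Q = {q \<in> Q. {q - z | z. z \<in> int_orthant} \<inter> Q = {}}"

definition eps_min :: "real^'p \<Rightarrow> (real^'p) set \<Rightarrow> (real^'p) set" where
  "eps_min eps Q = {q \<in> Q. {q - eps - z | z. z \<in> int_orthant} \<inter> Q = {}}"

definition conormal :: "real^'p \<Rightarrow> (real^'p) set \<Rightarrow> (real^'p) set" where
  "conormal M Q = {q + z | q z. q \<in> Q \<and> z \<in> nonneg_orthant} \<inter> {M - z | z. z \<in> nonneg_orthant}"

definition Ydiamond :: "(real^'n) set \<Rightarrow> (real^'n \<Rightarrow> real^'p) \<Rightarrow> real^'p \<Rightarrow> (real^'p) set" where
  "Ydiamond S f M = {y + z | y z. y \<in> f ` S \<and> z \<in> nonneg_orthant} \<inter> {M - z | z. z \<in> nonneg_orthant}"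

definition P2_obj :: "(real^'n \<Rightarrow> real^'p) \<Rightarrow> real^'p \<Rightarrow> real^'p \<Rightarrow> real^'n \<Rightarrow> real" where
  "P2_obj f dhat v x = Max (range (\<lambda>j. (f x $ j - v $ j) / dhat $ j))"

definition P2_optimal :: "(real^'n) set \<Rightarrow> (real^'n \<Rightarrow> real^'p) \<Rightarrow> real^'p \<Rightarrow> real^'p \<Rightarrow> real^'n \<Rightarrow> real \<Rightarrow> bool" where
  "P2_optimal S f dhat v x t \<longleftrightarrow> x \<in> S \<and> t = P2_obj f dhat v x \<and> (\<forall>y\<in>S. t \<le> P2_obj f dhat v y)"

definition remove_improper :: "(real^'p) set \<Rightarrow> (real^'p) set" where
  "remove_improper V = {v \<in> V. \<not> (\<exists>v'\<in>V. v' \<noteq> v \<and> v' \<le> v)}"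

text \<open>One pass of the while loop of Solve(QVP). State = (V^k, V_eps, Y_WN).\<close>
inductive solve_step ::
  "(real^'n) set \<Rightarrow> (real^'n \<Rightarrow> real^'p) \<Rightarrow> real^'p \<Rightarrow> real
   \<Rightarrow> (real^'p) set \<times> (real^'p) set \<times> (real^'p) set
   \<Rightarrow> (real^'p) set \<times> (real^'p) set \<times> (real^'p) set \<Rightarrow> bool"
  for S f dhat eps where
  eps_step: "\<lbrakk> v \<in> V; v \<notin> Ve; P2_optimal S f dhat v x t;
              norm ((v + t *\<^sub>R dhat) - v) \<le> eps \<rbrakk>
     \<Longrightarrow> solve_step S f dhat eps (V, Ve, Y) (V, insert v Ve, insert (f x) Y)"
| split_step: "\<lbrakk> v \<in> V; v \<notin> Ve; P2_optimal S f dhat v x t;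
              norm ((v + t *\<^sub>R dhat) - v) > eps \<rbrakk>
     \<Longrightarrow> solve_step S f dhat eps (V, Ve, Y)
          (remove_improper ((V - {v}) \<union>
              range (\<lambda>i. v + ((v + t *\<^sub>R dhat) $ i - v $ i) *\<^sub>R axis i 1)),
           Ve, insert (f x) Y)"

end

theory Submission
  imports Defs
begin

lemma le_vec_iff: "(x::real^'p) \<le> y \<longleftrightarrow> (\<forall>i. x$i \<le> y$i)"
  by (simp add: less_eq_vec_def)

lemma conormal_char: "conormal M Q = {y. (\<exists>q\<in>Q. q \<le> y) \<and> y \<le> M}"
proof -
  have "y \<in> conormal M Q \<longleftrightarrow> (\<exists>q\<in>Q. q \<le> y) \<and> y \<le> M" for y
  proof
    assume "y \<in> conormal M Q"
    then obtain q z z' where "q \<in> Q" "z \<in> nonneg_orthant" "y = q + z" "z' \<in> nonneg_orthant" "y = M - z'"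
      unfolding conormal_def by blast
    then have "\<forall>i. y$i = M$i - z'$i" "\<forall>i. y$i = q$i + z$i" by (metis vector_minus_component vector_add_component)+
    moreover have "\<forall>i. 0 \<le> z$i" "\<forall>i. 0 \<le> z'$i" using \<open>z \<in> nonneg_orthant\<close> \<open>z' \<in> nonneg_orthant\<close>
      unfolding nonneg_orthant_def by auto
    ultimately have "q \<le> y" unfolding le_vec_iff by (metis le_add_same_cancel1)
    moreover have "y \<le> M" unfolding le_vec_iff
      using \<open>\<forall>i. y$i = M$i - z'$i\<close> \<open>\<forall>i. 0 \<le> z'$i\<close> by (metis diff_le_eq le_add_same_cancel1)
    ultimately have "q \<le> y" "y \<le> M" by auto
    then show "(\<exists>q\<in>Q. q \<le> y) \<and> y \<le> M" using \<open>q \<in> Q\<close> by blast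
  next
    assume "(\<exists>q\<in>Q. q \<le> y) \<and> y \<le> M"
    then obtain q where "q \<in> Q" "q \<le> y" "y \<le> M" by blast
    then have "y = q + (y - q)" "y - q \<in> nonneg_orthant" "y = M - (M - y)" "M - y \<in> nonneg_orthant"
      by (auto simp: nonneg_orthant_def le_vec_iff)
    then show "y \<in> conormal M Q" unfolding conormal_def using \<open>q \<in> Q\<close> by blast
  qed
  then show ?thesis by blast
qed

lemma Ydiamond_char: "Ydiamond S f M = conormal M (f ` S)"
  unfolding Ydiamond_def conormal_def by simp

lemma WMin_char: "WMin Q = {q\<in>Q. \<not>(\<exists>y\<in>Q. \<forall>i. y$i < q$i)}"
proof -
  have "({q - z | z. z \<in> int_orthant} \<inter> Q = {}) \<longleftrightarrow> \<not>(\<exists>y\<in>Q. \<forall>i. y$i < q$i)" for q :: "real^'a"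
  proof
    assume a: "{q - z | z. z \<in> int_orthant} \<inter> Q = {}"
    show "\<not>(\<exists>y\<in>Q. \<forall>i. y$i < q$i)"
    proof
      assume "\<exists>y\<in>Q. \<forall>i. y$i < q$i"
      then obtain y where "y \<in> Q" "\<forall>i. y$i < q$i" by blast
      then have "y = q - (q - y)" "q - y \<in> int_orthant" by (auto simp: int_orthant_def)
      then show False using a \<open>y \<in> Q\<close> by blast
    qed
  next
    assume "\<not>(\<exists>y\<in>Q. \<forall>i. y$i < q$i)"
    then show "{q - z | z. z \<in> int_orthant} \<inter> Q = {}" by (auto simp: int_orthant_def)
  qed
  then show ?thesis unfolding WMin_def by blast
qed

lemma eps_min_char: "eps_min e Q = {q\<in>Q. \<not>(\<exists>y\<in>Q. \<forall>i. y$i < q$i - e$i)}"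
proof -
  have "({q - e - z | z. z \<in> int_orthant} \<inter> Q = {}) \<longleftrightarrow> \<not>(\<exists>y\<in>Q. \<forall>i. y$i < q$i - e$i)" for q :: "real^'a"
  proof
    assume a: "{q - e - z | z. z \<in> int_orthant} \<inter> Q = {}"
    show "\<not>(\<exists>y\<in>Q. \<forall>i. y$i < q$i - e$i)"
    proof
      assume "\<exists>y\<in>Q. \<forall>i. y$i < q$i - e$i"
      then obtain y where "y \<in> Q" "\<forall>i. y$i < q$i - e$i" by blast
      then have "y = q - e - (q - e - y)" "q - e - y \<in> int_orthant" by (auto simp: int_orthant_def)
      then show False using a \<open>y \<in> Q\<close> by blast
    qed
  next
    assume "\<not>(\<exists>y\<in>Q. \<forall>i. y$i < q$i - e$i)"
    then show "{q - e - z | z. z \<in> int_orthant} \<inter> Q = {}" by (auto simp: int_orthant_def)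
  qed
  then show ?thesis unfolding eps_min_def by blast
qed

lemma remove_improper_below:
  fixes R :: "(real^'p) set"
  assumes "finite R" "r \<in> R"
  shows "\<exists>r'\<in>remove_improper R. r' \<le> r"
proof -
  obtain m where "m \<in> R" "m \<le> r" "\<forall>b\<in>R. b \<le> m \<longrightarrow> m = b"
    using finite_has_minimal2[OF assms] by blast
  then show ?thesis unfolding remove_improper_def by blast
qed

definition qinv where
  "qinv S f eps st \<longleftrightarrow> (case st of (V, Ve, Y) \<Rightarrow>
     finite V \<and> (\<forall>v\<in>V. \<forall>v'\<in>V. v' \<le> v \<longrightarrow> v' = v)
     \<and> (\<forall>v\<in>V. \<forall>x\<in>S. \<not> (\<forall>i. f x $ i < v $ i))
     \<and> Ve \<subseteq> V \<and> (\<forall>x\<in>S. \<exists>v\<in>V. v \<le> f x)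
     \<and> (\<forall>v\<in>Ve. \<exists>x\<in>S. f x \<in> Y \<and> (\<forall>i. f x $ i \<le> v $ i + eps))
     \<and> Y \<subseteq> f ` S)"

lemma P2_facts:
  fixes f :: "real^'n \<Rightarrow> real^'p"
  assumes opt: "P2_optimal S f dhat v x t" and dpos: "\<forall>i. 0 < dhat $ i"
  shows "x \<in> S" "\<forall>i. f x $ i \<le> v $ i + t * dhat $ i"
    "\<forall>y\<in>S. \<exists>i. v $ i + t * dhat $ i \<le> f y $ i"
proof -
  show "x \<in> S" using opt unfolding P2_optimal_def by auto
  show "\<forall>i. f x $ i \<le> v $ i + t * dhat $ i"
  proof
    fix i
    have "(f x $ i - v $ i) / dhat $ i \<le> t"
      using opt unfolding P2_optimal_def P2_obj_def by (auto intro: Max_ge)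
    then show "f x $ i \<le> v $ i + t * dhat $ i" using dpos[rule_format, of i]
      by (simp add: pos_divide_le_eq algebra_simps)
  qed
  show "\<forall>y\<in>S. \<exists>i. v $ i + t * dhat $ i \<le> f y $ i"
  proof
    fix y assume "y \<in> S"
    then have "t \<le> P2_obj f dhat v y" using opt unfolding P2_optimal_def by auto
    moreover have "P2_obj f dhat v y \<in> range (\<lambda>j. (f y $ j - v $ j) / dhat $ j)"
      unfolding P2_obj_def by (rule Max_in) auto
    ultimately obtain i where "t \<le> (f y $ i - v $ i) / dhat $ i" by auto
    then have "v $ i + t * dhat $ i \<le> f y $ i" using dpos[rule_format, of i]
      by (simp add: pos_le_divide_eq algebra_simps)
    then show "\<exists>i. v $ i + t * dhat $ i \<le> f y $ i" by blast
  qed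
qed


lemma axis_comp: "(v + s *\<^sub>R axis i 1) $ j = v $ j + (if j = i then s else (0::real))"
  by (simp add: axis_def)

lemma inv_init:
  fixes f :: "real^'n \<Rightarrow> real^'p"
  assumes "\<forall>i. \<forall>x\<in>S. m $ i \<le> f x $ i"
  shows "qinv S f eps ({m}, {}, {})"
  using assms unfolding qinv_def by (auto simp: le_vec_iff not_less)

lemma inv_step:
  fixes f :: "real^'n \<Rightarrow> real^'p"
  assumes st: "solve_step S f dhat eps s s'" and I: "qinv S f eps s"
    and dpos: "\<forall>i. 0 < dhat $ i"
  shows "qinv S f eps s'"
  using st
proof cases
  case (eps_step v V Ve x t Y)
  note F = P2_facts[OF eps_step(5) dpos]
  have "\<forall>i. f x $ i \<le> v $ i + eps"
  proof
    fix i
    have "t * dhat $ i \<le> norm (t *\<^sub>R dhat)"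
      using component_le_norm_cart[of "t *\<^sub>R dhat" i] by simp
    then have "t * dhat $ i \<le> eps" using eps_step(6) by simp
    then show "f x $ i \<le> v $ i + eps" using F(2)[rule_format, of i] by linarith
  qed
  then show ?thesis using I F(1) eps_step unfolding qinv_def by auto
next
  case (split_step v V Ve x t Y)
  note F = P2_facts[OF split_step(5) dpos]
  have fin: "finite V" and ac: "\<forall>v\<in>V. \<forall>v'\<in>V. v' \<le> v \<longrightarrow> v' = v"
    and I3: "\<forall>v\<in>V. \<forall>x\<in>S. \<not> (\<forall>i. f x $ i < v $ i)"
    and I4: "Ve \<subseteq> V" and I5: "\<forall>x\<in>S. \<exists>v\<in>V. v \<le> f x"
    and I6: "\<forall>v\<in>Ve. \<exists>x\<in>S. f x \<in> Y \<and> (\<forall>i. f x $ i \<le> v $ i + eps)"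
    and I7: "Y \<subseteq> f ` S"
    using I split_step(1) unfolding qinv_def by auto
  have tnn: "0 \<le> t"
  proof (rule ccontr)
    assume "\<not> 0 \<le> t"
    have "\<forall>i. f x $ i < v $ i"
    proof
      fix i
      have "t * dhat $ i < 0" using \<open>\<not> 0 \<le> t\<close> dpos[rule_format, of i] by (simp add: mult_neg_pos)
      then show "f x $ i < v $ i" using F(2)[rule_format, of i] by linarith
    qed
    then show False using I3 split_step(3) F(1) by blast
  qed
  define C where "C = range (\<lambda>i. v + ((v + t *\<^sub>R dhat) $ i - v $ i) *\<^sub>R axis i (1::real))"
  define R where "R = (V - {v}) \<union> C"
  have Cc: "c \<in> C \<Longrightarrow> \<exists>i. \<forall>j. c $ j = v $ j + (if j = i then t * dhat $ i else 0)" for c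
  proof -
    assume "c \<in> C"
    then obtain i where "c = v + ((v + t *\<^sub>R dhat) $ i - v $ i) *\<^sub>R axis i (1::real)"
      unfolding C_def by blast
    then have "\<forall>j. c $ j = v $ j + (if j = i then t * dhat $ i else 0)"
      by (simp only: axis_comp) simp
    then show ?thesis by blast
  qed
  have s'eq: "s' = (remove_improper R, Ve, insert (f x) Y)"
    using split_step(2) unfolding R_def C_def by simp
  have finR: "finite R" unfolding R_def C_def using fin by simp
  have sub: "remove_improper R \<subseteq> R" unfolding remove_improper_def by auto
  have Cge: "c \<in> C \<Longrightarrow> v \<le> c" for c
    using Cc[of c] tnn dpos by (auto simp: le_vec_iff less_imp_le)
  have J1: "finite (remove_improper R)" using finR sub finite_subset by blast
  have J2: "\<forall>a\<in>remove_improper R. \<forall>b\<in>remove_improper R. b \<le> a \<longrightarrow> b = a"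
    unfolding remove_improper_def by blast
  have J3: "\<forall>c\<in>remove_improper R. \<forall>y\<in>S. \<not> (\<forall>i. f y $ i < c $ i)"
  proof (intro ballI notI)
    fix c y assume c: "c \<in> remove_improper R" and y: "y \<in> S" and lt: "\<forall>i. f y $ i < c $ i"
    have "c \<in> R" using c sub by blast
    show False
    proof (cases "c \<in> C")
      case True
      then obtain i where ci: "\<forall>j. c $ j = v $ j + (if j = i then t * dhat $ i else 0)" using Cc by blast
      have "\<forall>j. f y $ j < v $ j + t * dhat $ j"
      proof
        fix j
        have "0 \<le> t * dhat $ j" using tnn dpos[rule_format, of j] by simp
        then show "f y $ j < v $ j + t * dhat $ j" using lt[rule_format, of j] ci[rule_format, of j] by (auto split: if_splits)
      qed
      then show False using F(3) y by (meson not_le)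
    next
      case False
      then have "c \<in> V" using \<open>c \<in> R\<close> unfolding R_def by blast
      then show False using I3 y lt by blast
    qed
  qed
  have J4: "Ve \<subseteq> remove_improper R"
  proof
    fix u assume u: "u \<in> Ve"
    have uv: "u \<noteq> v" using u split_step(4) by blast
    have uV: "u \<in> V" using u I4 by blast
    have "u \<in> R" using uv uV unfolding R_def by blast
    moreover have "\<not> (\<exists>r\<in>R. r \<noteq> u \<and> r \<le> u)"
    proof
      assume "\<exists>r\<in>R. r \<noteq> u \<and> r \<le> u"
      then obtain r where r: "r \<in> R" "r \<noteq> u" "r \<le> u" by blast
      show False
      proof (cases "r \<in> C")
        case True
        then have "v \<le> u" using Cge r(3) order_trans by blast
        then show False using ac uV split_step(3) uv by blast
      next
        case False
        then have "r \<in> V" using r(1) unfolding R_def by blast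
        then show False using ac uV r by blast
      qed
    qed
    ultimately show "u \<in> remove_improper R" unfolding remove_improper_def by blast
  qed
  have J5: "\<forall>y\<in>S. \<exists>c\<in>remove_improper R. c \<le> f y"
  proof
    fix y assume y: "y \<in> S"
    obtain v0 where v0: "v0 \<in> V" "v0 \<le> f y" using I5 y by blast
    have "\<exists>r\<in>R. r \<le> f y"
    proof (cases "v0 = v")
      case False
      then show ?thesis using v0 unfolding R_def by blast
    next
      case True
      obtain i where i: "v $ i + t * dhat $ i \<le> f y $ i" using F(3) y by blast
      define c where "c = v + ((v + t *\<^sub>R dhat) $ i - v $ i) *\<^sub>R axis i (1::real)"
      have "c \<in> C" unfolding C_def c_def by blast
      moreover have "c \<le> f y" using i v0 True unfolding le_vec_iff c_def axis_comp by auto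
      ultimately show ?thesis unfolding R_def by blast
    qed
    then obtain r where "r \<in> R" "r \<le> f y" by blast
    then show "\<exists>c\<in>remove_improper R. c \<le> f y"
      using remove_improper_below[OF finR] order_trans by blast
  qed
  have J6: "\<forall>u\<in>Ve. \<exists>z\<in>S. f z \<in> insert (f x) Y \<and> (\<forall>i. f z $ i \<le> u $ i + eps)"
    using I6 by blast
  have J7: "insert (f x) Y \<subseteq> f ` S" using I7 F(1) by blast
  show ?thesis unfolding s'eq qinv_def using J1 J2 J3 J4 J5 J6 J7 by (simp only: prod.case)
qed

lemma inv_run:
  fixes f :: "real^'n \<Rightarrow> real^'p"
  assumes "(solve_step S f dhat eps)\<^sup>*\<^sup>* s s'" "qinv S f eps s" "\<forall>i. 0 < dhat $ i"
  shows "qinv S f eps s'"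
  using assms by (induction rule: rtranclp_induct) (auto intro: inv_step)

theorem mainTheorem9:
  fixes S :: "(real^'n) set"
    and f :: "real^'n \<Rightarrow> real^'p"
    and m M dhat :: "real^'p"
    and eps :: real
    and V Ve YWN :: "(real^'p) set"
  assumes p2: "CARD('p) \<ge> 2"
    and S_ne: "S \<noteq> {}" and S_convex: "convex S" and S_compact: "compact S"
    and f_sqc: "\<forall>i. strictly_quasiconvex_on S (\<lambda>x. f x $ i)"
    and m_min: "\<forall>i. (\<exists>x\<in>S. f x $ i = m $ i) \<and> (\<forall>x\<in>S. m $ i \<le> f x $ i)"
    and m_notin: "m \<notin> f ` S"
    and M_ub: "\<forall>i. \<forall>x\<in>S. f x $ i \<le> M $ i"
    and dhat_pos: "\<forall>i. 0 < dhat $ i"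
    and eps_nonneg: "0 \<le> eps"
    and run: "(solve_step S f dhat eps)\<^sup>*\<^sup>* ({m}, {}, {}) (V, Ve, YWN)"
    and terminated: "V - Ve = {}"
  shows "let epsv = (\<chi> i. eps) :: real^'p;
             L = conormal M YWN;
             U = conormal M Ve;
             Yd = Ydiamond S f M
         in U = (\<Union>v\<in>V. {z. v \<le> z \<and> z \<le> M})
            \<and> (L \<subseteq> Yd \<and> Yd \<subseteq> U)
            \<and> (WMin Yd \<subseteq> eps_min epsv U \<inter> Yd \<and> eps_min epsv U \<inter> Yd \<subseteq> eps_min epsv Yd)
            \<and> WMin L \<subseteq> eps_min epsv Yd"
  proof -
  have I: "qinv S f eps (V, Ve, YWN)"
    by (rule inv_run[OF run inv_init]) (use m_min dhat_pos in auto)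
  have I4: "Ve \<subseteq> V" and I5: "\<forall>x\<in>S. \<exists>v\<in>V. v \<le> f x"
    and I6: "\<forall>v\<in>Ve. \<exists>x\<in>S. f x \<in> YWN \<and> (\<forall>i. f x $ i \<le> v $ i + eps)"
    and I7: "YWN \<subseteq> f ` S"
    using I unfolding qinv_def by auto
  have VV: "Ve = V" using I4 terminated by blast
  define epsv :: "real^'p" where "epsv = (\<chi> i. eps)"
  have ec: "epsv $ i = eps" for i unfolding epsv_def by simp
  define L where "L = conormal M YWN"
  define U where "U = conormal M Ve"
  define Yd where "Yd = Ydiamond S f M"
  have Lc: "L = {y. (\<exists>q\<in>YWN. q \<le> y) \<and> y \<le> M}" unfolding L_def conormal_char ..
  have Uc: "U = {y. (\<exists>q\<in>V. q \<le> y) \<and> y \<le> M}" unfolding U_def conormal_char VV ..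
  have Yc: "Yd = {y. (\<exists>q\<in>f ` S. q \<le> y) \<and> y \<le> M}" unfolding Yd_def Ydiamond_char conormal_char ..
  have fM: "x \<in> S \<Longrightarrow> f x \<le> M" for x using M_ub by (simp add: le_vec_iff)
  have A: "U = (\<Union>v\<in>V. {z. v \<le> z \<and> z \<le> M})" unfolding Uc by blast
  have B1: "L \<subseteq> Yd" unfolding Lc Yc using I7 by blast
  have B2: "Yd \<subseteq> U" unfolding Yc Uc using I5 order_trans by blast
  have C1: "WMin Yd \<subseteq> eps_min epsv U \<inter> Yd"
  proof
    fix q assume q: "q \<in> WMin Yd"
    then have qY: "q \<in> Yd" and nq: "\<not>(\<exists>y\<in>Yd. \<forall>i. y$i < q$i)" unfolding WMin_char by auto
    have "\<not>(\<exists>u\<in>U. \<forall>i. u$i < q$i - epsv$i)"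
    proof
      assume "\<exists>u\<in>U. \<forall>i. u$i < q$i - epsv$i"
      then obtain u where u: "u \<in> U" "\<forall>i. u$i < q$i - eps" using ec by auto
      then obtain v where v: "v \<in> V" "v \<le> u" unfolding Uc by blast
      then obtain z where z: "z \<in> S" "\<forall>i. f z $ i \<le> v $ i + eps" using I6 VV by blast
      have "\<forall>i. f z $ i < q $ i"
      proof
        fix i
        show "f z $ i < q $ i" using z(2) u(2) v(2) unfolding le_vec_iff
          by (metis add.commute less_diff_eq order_le_less_trans add_le_cancel_left)
      qed
      moreover have "f z \<in> Yd" unfolding Yc using z(1) fM by blast
      ultimately show False using nq by blast
    qed
    then show "q \<in> eps_min epsv U \<inter> Yd" using qY B2 unfolding eps_min_char by blast
  qed
  have C2: "eps_min epsv U \<inter> Yd \<subseteq> eps_min epsv Yd"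
    using B2 unfolding eps_min_char by blast
  have D: "WMin L \<subseteq> eps_min epsv Yd"
  proof
    fix q assume q: "q \<in> WMin L"
    then have qL: "q \<in> L" and nq: "\<not>(\<exists>y\<in>L. \<forall>i. y$i < q$i)" unfolding WMin_char by auto
    have "\<not>(\<exists>u\<in>Yd. \<forall>i. u$i < q$i - epsv$i)"
    proof
      assume "\<exists>u\<in>Yd. \<forall>i. u$i < q$i - epsv$i"
      then obtain u where u: "u \<in> Yd" "\<forall>i. u$i < q$i - eps" using ec by auto
      then obtain v where v: "v \<in> V" "v \<le> u" using B2 unfolding Uc by blast
      then obtain z where z: "z \<in> S" "f z \<in> YWN" "\<forall>i. f z $ i \<le> v $ i + eps" using I6 VV by blast
      have "\<forall>i. f z $ i < q $ i"
      proof
        fix i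
        show "f z $ i < q $ i" using z(3) u(2) v(2) unfolding le_vec_iff
          by (metis add.commute less_diff_eq order_le_less_trans add_le_cancel_left)
      qed
      moreover have "f z \<in> L" unfolding Lc using z fM by blast
      ultimately show False using nq by blast
    qed
    then show "q \<in> eps_min epsv Yd" using qL B1 unfolding eps_min_char by blast
  qed
  show ?thesis
    unfolding Let_def epsv_def[symmetric] L_def[symmetric] U_def[symmetric] Yd_def[symmetric]
    using A B1 B2 C1 C2 D by blast
qed

end
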